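(* Consider the binary-type case $N=2$ with a Low type and a High type, with parameters $p_L,p_H\in(0,1]$, $c_L,c_H>0$, $r_L,r_H\in(0,1]$, $r_L<r_H$. Write the four actions as $O=\emptyset$, $L=\{\text{Low}\}$, $H=\{\text{High}\}$, $B=\{\text{Low},\text{High}\}$, so $Q_O=0$, $Q_L=r_Lp_L$, $Q_H=r_Hp_H$, $Q_B=1-(1-Q_L)(1-Q_H)$, $E_O=0$, $E_L=p_Lc_L$, $E_H=p_Hc_H$, $E_B=E_L+E_H$, and $\gamma_{O,L}=E_L/Q_L$, $\gamma_{O,H}=E_H/Q_H$. Then there exists an optimal deterministic stationary threshold-type age-dependent policy $\phi^*$ of the MDP $\Lambda$, which has one of the following structures: (1) (LH structure) if $\frac{1-Q_H}{1-Q_L}<\frac{\gamma_{O,L}}{\gamma_{O,H}}<1$, then $\phi^*$ uses actions in the order $O,L,H,B$ with thresholds $1\le\theta_{O\to L}\le\theta_{L\to H}\le\theta_{H\to B}$ in $\mathbb{N}^+$ (i.e. $\phi^*(s)=O$ for $s<\theta_{O\to L}$, $L$ for $\theta_{O\to L}\le s<\theta_{L\to H}$, $H$ for $\theta_{L\to H}\le s<\theta_{H\to B}$, $B$ for $s\ge\theta_{H\to B}$); (2) (HL structure) if $1<\frac{\gamma_{O,L}}{\gamma_{O,H}}<\frac{1-Q_H}{1-Q_L}$, then $\phi^*$ uses actions in the order $O,H,L,B$ with thresholds $1\le\theta_{O\to H}\le\theta_{H\to L}\le\theta_{L\to B}$; (3) (None-L structure) if $\frac{\gamma_{O,L}}{\gamma_{O,H}}\ge\max\{1,\frac{1-Q_H}{1-Q_L}\}$,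 then $\phi^*$ uses actions in the order $O,H,B$ with thresholds $1\le\theta_{O\to H}\le\theta_{H\to B}$; (4) (None-H structure) if $\frac{\gamma_{O,L}}{\gamma_{O,H}}<\min\{1,\frac{1-Q_H}{1-Q_L}\}$, then $\phi^*$ uses actions in the order $O,L,B$ with thresholds $1\le\theta_{O\to L}\le\theta_{L\to B}$.
   Context: General model: vehicle types $\mathcal{N}$, each type $n$ with arrival probability $p_n$, mean operational cost $c_n$, mean sensing capability $r_n$; fixed $\beta\in(0,1)$, $\epsilon>0$. Actions $\mathcal{A}=2^{\mathcal{N}}$; success probability $Q_\emptyset=0$, $Q_a=1-\prod_{n\in a}(1-r_np_n)$; expected recruitment cost $E_a=\sum_{n\in a}p_nc_n$; marginal cost-effectiveness $\gamma_{a,a'}=(E_{a'}-E_a)/(Q_{a'}-Q_a)$. Immediate cost at state $\delta\in\mathbb{N}^+$: $u(\delta,a)=(1-\beta)E_a-\beta\epsilon\big(Q_a(\delta^2+2\delta)-(1+\delta)^2\big)$. MDP $\Lambda$: states $\mathbb{N}^+$; from state $s$ under action $a$ move to $1$ w.p. $Q_a$ and to $s+1$ w.p. $1-Q_a$; average cost $V(\phi)=\limsup_{T\to\infty}\frac1T\mathbb{E}^\phi[\sum_{t=1}^Tu(S(t),A(t))]$, $S(1)=1$, to be minimized over all policies. A threshold-type age-dependent policy is a deterministic stationary policy $\phi:\mathbb{N}^+\to\mathcal{A}$ that is piecewise constant in $s$, taking successive actions $b_1,\dots,b_K$ on consecutive intervals of states delimited by integer thresholds $\theta_{b_k\to b_{k+1}}$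 (the first state at which $b_{k+1}$ is used); equal consecutive thresholds mean the intermediate action is not used. *)

theory Defs
  imports "HOL-Probability.Probability"
begin

datatype vtype = Low | High

type_synonym action = "vtype set"

text \<open>Model parameters: p (arrival prob.), c (mean cost), r (mean sensing capability).\<close>

definition Qa :: "(vtype \<Rightarrow> real) \<Rightarrow> (vtype \<Rightarrow> real) \<Rightarrow> action \<Rightarrow> real" where
  "Qa p r a = 1 - (\<Prod>n\<in>a. 1 - r n * p n)"

definition Ea :: "(vtype \<Rightarrow> real) \<Rightarrow> (vtype \<Rightarrow> real) \<Rightarrow> action \<Rightarrow> real" where
  "Ea p c a = (\<Sum>n\<in>a. p n * c n)"

definition gamma :: "(vtype \<Rightarrow> real) \<Rightarrow> (vtype \<Rightarrow> real) \<Rightarrow> (vtype \<Rightarrow> real) \<Rightarrow> action \<Rightarrow> action \<Rightarrow> real" where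
  "gamma p c r a a' = (Ea p c a' - Ea p c a) / (Qa p r a' - Qa p r a)"

definition ucost :: "(vtype \<Rightarrow> real) \<Rightarrow> (vtype \<Rightarrow> real) \<Rightarrow> (vtype \<Rightarrow> real) \<Rightarrow> real \<Rightarrow> real
    \<Rightarrow> nat \<Rightarrow> action \<Rightarrow> real" where
  "ucost p c r \<beta> \<epsilon> \<delta> a =
     (1 - \<beta>) * Ea p c a
     - \<beta> * \<epsilon> * (Qa p r a * (real \<delta> ^ 2 + 2 * real \<delta>) - (1 + real \<delta>) ^ 2)"

definition trans :: "(vtype \<Rightarrow> real) \<Rightarrow> (vtype \<Rightarrow> real) \<Rightarrow> nat \<Rightarrow> action \<Rightarrow> nat pmf" where
  "trans p r s a = map_pmf (\<lambda>b. if b then 1 else s + 1) (bernoulli_pmf (Qa p r a))"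

type_synonym policy = "(nat \<times> action) list \<Rightarrow> nat \<Rightarrow> action pmf"

fun hist :: "(vtype \<Rightarrow> real) \<Rightarrow> (vtype \<Rightarrow> real) \<Rightarrow> policy \<Rightarrow> nat
    \<Rightarrow> ((nat \<times> action) list \<times> nat) pmf" where
  "hist p r \<phi> 0 = return_pmf ([], 1)"
| "hist p r \<phi> (Suc t) =
     bind_pmf (hist p r \<phi> t) (\<lambda>(h, s).
       bind_pmf (\<phi> h s) (\<lambda>a.
         map_pmf (\<lambda>s'. (h @ [(s, a)], s')) (trans p r s a)))"

text \<open>Expected immediate cost at time t+1, i.e. E[u(S(t+1), A(t+1))].\<close>
definition stage_cost :: "(vtype \<Rightarrow> real) \<Rightarrow> (vtype \<Rightarrow> real) \<Rightarrow> (vtype \<Rightarrow> real) \<Rightarrow> real \<Rightarrow> real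
    \<Rightarrow> policy \<Rightarrow> nat \<Rightarrow> real" where
  "stage_cost p c r \<beta> \<epsilon> \<phi> t =
     measure_pmf.expectation
       (bind_pmf (hist p r \<phi> t) (\<lambda>(h, s). map_pmf (\<lambda>a. (s, a)) (\<phi> h s)))
       (\<lambda>(s, a). ucost p c r \<beta> \<epsilon> s a)"

definition avg_cost :: "(vtype \<Rightarrow> real) \<Rightarrow> (vtype \<Rightarrow> real) \<Rightarrow> (vtype \<Rightarrow> real) \<Rightarrow> real \<Rightarrow> real
    \<Rightarrow> policy \<Rightarrow> ereal" where
  "avg_cost p c r \<beta> \<epsilon> \<phi> =
     limsup (\<lambda>T. ereal ((\<Sum>t<T. stage_cost p c r \<beta> \<epsilon> \<phi> t) / real T))"

definition stationary :: "(nat \<Rightarrow> action) \<Rightarrow> policy" where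
  "stationary d = (\<lambda>h s. return_pmf (d s))"

definition optimal_ds :: "(vtype \<Rightarrow> real) \<Rightarrow> (vtype \<Rightarrow> real) \<Rightarrow> (vtype \<Rightarrow> real) \<Rightarrow> real \<Rightarrow> real
    \<Rightarrow> (nat \<Rightarrow> action) \<Rightarrow> bool" where
  "optimal_ds p c r \<beta> \<epsilon> d \<longleftrightarrow>
     (\<forall>\<psi>. avg_cost p c r \<beta> \<epsilon> (stationary d) \<le> avg_cost p c r \<beta> \<epsilon> \<psi>)"

definition threshold_type :: "(nat \<Rightarrow> action) \<Rightarrow> bool" where
  "threshold_type d \<longleftrightarrow>
     (\<exists>K (b :: nat \<Rightarrow> action) (\<theta> :: nat \<Rightarrow> nat).
        \<theta> 0 = 1 \<and> (\<forall>k<K. \<theta> k \<le> \<theta> (Suc k)) \<and>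
        (\<forall>k<K. \<forall>s. \<theta> k \<le> s \<and> s < \<theta> (Suc k) \<longrightarrow> d s = b k) \<and>
        (\<forall>s. \<theta> K \<le> s \<longrightarrow> d s = b K))"

abbreviation actO :: action where "actO \<equiv> {}"
abbreviation actL :: action where "actL \<equiv> {Low}"
abbreviation actH :: action where "actH \<equiv> {High}"
abbreviation actB :: action where "actB \<equiv> {Low, High}"

definition struct3 :: "action \<Rightarrow> action \<Rightarrow> (nat \<Rightarrow> action) \<Rightarrow> bool" where
  "struct3 x y d \<longleftrightarrow>
     (\<exists>\<theta>1 \<theta>2 \<theta>3 :: nat. 1 \<le> \<theta>1 \<and> \<theta>1 \<le> \<theta>2 \<and> \<theta>2 \<le> \<theta>3 \<and>
        (\<forall>s\<ge>1. d s = (if s < \<theta>1 then actO else if s < \<theta>2 then x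
                       else if s < \<theta>3 then y else actB)))"

definition struct2 :: "action \<Rightarrow> (nat \<Rightarrow> action) \<Rightarrow> bool" where
  "struct2 x d \<longleftrightarrow>
     (\<exists>\<theta>1 \<theta>2 :: nat. 1 \<le> \<theta>1 \<and> \<theta>1 \<le> \<theta>2 \<and>
        (\<forall>s\<ge>1. d s = (if s < \<theta>1 then actO else if s < \<theta>2 then x else actB)))"

end

theory Submission
  imports Defs
begin

lemma vt_UNIV: "(UNIV :: vtype set) = {Low, High}"
  using vtype.exhaust by auto

lemma fin_UNIV_act: "finite (UNIV :: action set)"
proof -
  have "finite (UNIV :: vtype set)" by (simp add: vt_UNIV)
  then have "finite (Pow (UNIV :: vtype set))" by (simp only: finite_Pow_iff)
  moreover have "Pow (UNIV :: vtype set) = UNIV" by (rule Pow_UNIV)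
  ultimately show ?thesis by (simp only:)
qed
lemma fin_act: "finite (set_pmf (M :: action pmf))"
  by (rule finite_subset[OF subset_UNIV fin_UNIV_act])

lemma fin_trans: "finite (set_pmf (trans p r s a))"
  unfolding trans_def set_map_pmf
  by (rule finite_imageI[OF finite_subset[OF subset_UNIV]]) (rule finite_class.finite_UNIV)

lemma fin_hist: "finite (set_pmf (hist p r \<psi> t))"
proof (induction t)
  case (Suc t)
  show ?case
    apply (simp only: hist.simps set_bind_pmf split_beta set_map_pmf)
    apply (rule finite_UN_I[OF Suc])
    apply (rule finite_UN_I[OF fin_act])
    apply (rule finite_imageI[OF fin_trans])
    done
qed simp

lemma exp_bind:
  fixes f :: "'b \<Rightarrow> real"
  assumes "finite (set_pmf M)" "\<And>x. x \<in> set_pmf M \<Longrightarrow> finite (set_pmf (N x))"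
  shows "measure_pmf.expectation (bind_pmf M N) f =
         measure_pmf.expectation M (\<lambda>x. measure_pmf.expectation (N x) f)"
  apply (subst pmf_expectation_bind[of "set_pmf M"])
  using assms apply auto[3]
  apply (subst integral_measure_pmf[of "set_pmf M"])
  using assms apply auto
  done

definition Jx :: "(vtype \<Rightarrow> real) \<Rightarrow> (vtype \<Rightarrow> real) \<Rightarrow> policy \<Rightarrow> nat
   \<Rightarrow> (nat \<Rightarrow> action \<Rightarrow> real) \<Rightarrow> real" where
  "Jx p r \<psi> t \<phi> = measure_pmf.expectation (hist p r \<psi> t)
      (\<lambda>x. measure_pmf.expectation (\<psi> (fst x) (snd x)) (\<lambda>a. \<phi> (snd x) a))"

definition Ef :: "(vtype \<Rightarrow> real) \<Rightarrow> (vtype \<Rightarrow> real) \<Rightarrow> policy \<Rightarrow> nat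
   \<Rightarrow> (nat \<Rightarrow> real) \<Rightarrow> real" where
  "Ef p r \<psi> t f = measure_pmf.expectation (hist p r \<psi> t) (\<lambda>x. f (snd x))"

lemma stage_J: "stage_cost p c r \<beta> \<epsilon> \<psi> t = Jx p r \<psi> t (ucost p c r \<beta> \<epsilon>)"
  unfolding stage_cost_def Jx_def
  apply (subst exp_bind)
    apply (simp add: fin_hist)
   apply (simp add: split_beta fin_act)
  apply (simp add: split_beta)
  done

lemma trans_exp:
  assumes "0 \<le> Qa p r a" "Qa p r a \<le> 1"
  shows "measure_pmf.expectation (trans p r s a) (f :: nat \<Rightarrow> real)
     = Qa p r a * f 1 + (1 - Qa p r a) * f (s+1)"
  unfolding trans_def using assms by simp

lemma Ef_0: "Ef p r \<psi> 0 f = f 1"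
  unfolding Ef_def by simp

lemma Ef_Suc:
  assumes "\<And>a. 0 \<le> Qa p r a \<and> Qa p r a \<le> 1"
  shows "Ef p r \<psi> (Suc t) f = Jx p r \<psi> t (\<lambda>s a. Qa p r a * f 1 + (1 - Qa p r a) * f (s+1))"
  unfolding Ef_def Jx_def hist.simps
  apply (subst exp_bind)
    apply (simp add: fin_hist)
   apply (simp add: split_beta fin_act fin_trans)
  apply (rule Bochner_Integration.integral_cong[OF refl])
  apply (simp add: split_beta)
  apply (subst exp_bind)
    apply (simp add: fin_act)
   apply (simp add: fin_trans)
  apply (rule Bochner_Integration.integral_cong[OF refl])
  using assms by (simp add: trans_exp)

lemma J_const: "Jx p r \<psi> t (\<lambda>s a. f s) = Ef p r \<psi> t f"
  unfolding Jx_def Ef_def by simp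

lemma J_mono:
  assumes "\<And>s a. \<phi>1 s a \<le> \<phi>2 s a"
  shows "Jx p r \<psi> t \<phi>1 \<le> Jx p r \<psi> t \<phi>2"
  unfolding Jx_def
  apply (rule integral_mono)
    apply (simp_all add: integrable_measure_pmf_finite fin_hist)
  apply (rule integral_mono)
  apply (simp_all add: integrable_measure_pmf_finite fin_act assms)
  done

lemma J_add: "Jx p r \<psi> t (\<lambda>s a. \<phi>1 s a + \<phi>2 s a) = Jx p r \<psi> t \<phi>1 + Jx p r \<psi> t \<phi>2"
proof -
  have "\<And>x. measure_pmf.expectation (\<psi> (fst x) (snd x)) (\<lambda>a. \<phi>1 (snd x) a + \<phi>2 (snd x) a)
     = measure_pmf.expectation (\<psi> (fst x) (snd x)) (\<lambda>a. \<phi>1 (snd x) a)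
     + measure_pmf.expectation (\<psi> (fst x) (snd x)) (\<lambda>a. \<phi>2 (snd x) a)"
    by (rule Bochner_Integration.integral_add) (simp_all add: integrable_measure_pmf_finite fin_act)
  then show ?thesis
    unfolding Jx_def
    by (simp only:) (rule Bochner_Integration.integral_add; simp add: integrable_measure_pmf_finite fin_hist)
qed

lemma J_cmult: "Jx p r \<psi> t (\<lambda>s a. k * \<phi> s a) = k * Jx p r \<psi> t \<phi>"
  unfolding Jx_def by simp

lemma J_cst: "Jx p r \<psi> t (\<lambda>s a. k) = k"
  unfolding Jx_def by simp

lemma J_stat: "Jx p r (stationary d) t \<phi> = Ef p r (stationary d) t (\<lambda>s. \<phi> s (d s))"
  unfolding Jx_def Ef_def stationary_def by simp

lemma trans_supp:
  assumes "0 \<le> Qa p r a" "Qa p r a \<le> 1" "s' \<in> set_pmf (trans p r s a)"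
  shows "s' = 1 \<or> (s' = s + 1 \<and> Qa p r a < 1)"
proof -
  obtain b where b: "b \<in> set_pmf (bernoulli_pmf (Qa p r a))" "s' = (if b then 1 else s+1)"
    using assms(3) unfolding trans_def by auto
  show ?thesis
  proof (cases b)
    case False
    then have "pmf (bernoulli_pmf (Qa p r a)) False \<noteq> 0" using b(1) by (simp add: set_pmf_iff)
    then have "Qa p r a < 1" using assms by auto
    then show ?thesis using b False by auto
  qed (use b in auto)
qed

lemma hist_stat_supp:
  assumes Q: "\<And>a. 0 \<le> Qa p r a \<and> Qa p r a \<le> 1"
    and Z1: "1 \<in> Z" and Zc: "\<And>s. s \<in> Z \<Longrightarrow> Qa p r (d s) < 1 \<Longrightarrow> s + 1 \<in> Z"
  shows "x \<in> set_pmf (hist p r (stationary d) t) \<Longrightarrow> snd x \<in> Z"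
proof (induction t arbitrary: x)
  case 0
  then show ?case using Z1 by simp
next
  case (Suc t)
  then obtain h s s' where hs: "(h, s) \<in> set_pmf (hist p r (stationary d) t)"
     "s' \<in> set_pmf (trans p r s (d s))" "x = (h @ [(s, d s)], s')"
    by (auto simp: stationary_def split_beta)
  have "s \<in> Z" using Suc.IH[OF hs(1)] by simp
  then show ?case using trans_supp[OF _ _ hs(2)] Q[of "d s"] hs(3) Z1 Zc by auto
qed

lemma Ef_cong_Z:
  assumes Q: "\<And>a. 0 \<le> Qa p r a \<and> Qa p r a \<le> 1"
    and Z1: "1 \<in> Z" and Zc: "\<And>s. s \<in> Z \<Longrightarrow> Qa p r (d s) < 1 \<Longrightarrow> s + 1 \<in> Z"
    and eq: "\<And>s. s \<in> Z \<Longrightarrow> f s = g s"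
  shows "Ef p r (stationary d) t f = Ef p r (stationary d) t g"
  unfolding Ef_def
  apply (rule integral_cong_AE)
    apply simp_all
  apply (rule AE_pmfI)
  using hist_stat_supp[OF Q Z1 Zc] eq by auto

definition min4 :: "(action \<Rightarrow> real) \<Rightarrow> real" where
  "min4 f = min (min (f {}) (f {Low})) (min (f {High}) (f {Low, High}))"

lemma act_cases: "a = {} \<or> a = {Low} \<or> a = {High} \<or> a = {Low, High}"
proof (cases "Low \<in> a"; cases "High \<in> a")
  assume "Low \<in> a" "High \<in> a"
  then have "a = {Low, High}" by (intro set_eqI, case_tac x) auto
  then show ?thesis by simp
next
  assume "Low \<in> a" "High \<notin> a"
  then have "a = {Low}" by (intro set_eqI, case_tac x) auto
  then show ?thesis by simp
next
  assume "Low \<notin> a" "High \<in> a"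
  then have "a = {High}" by (intro set_eqI, case_tac x) auto
  then show ?thesis by simp
next
  assume "Low \<notin> a" "High \<notin> a"
  then have "a = {}" by (intro set_eqI, case_tac x) auto
  then show ?thesis by simp
qed
lemma min4_le: "min4 f \<le> f a"
  using act_cases[of a] unfolding min4_def by auto

lemma min4_attain: "\<exists>a. min4 f = f a"
  unfolding min4_def by (metis min_def)

lemma min4_ge: "(\<And>a. x \<le> f a) \<Longrightarrow> x \<le> min4 f"
  unfolding min4_def by simp

locale mdl =
  fixes p c r :: "vtype \<Rightarrow> real" and \<beta> \<epsilon> :: real
  assumes p: "\<And>n. 0 < p n \<and> p n \<le> 1"
    and c: "\<And>n. 0 < c n"
    and r: "\<And>n. 0 < r n \<and> r n \<le> 1"
    and rLH: "r Low < r High"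
    and beta: "0 < \<beta>" "\<beta> < 1"
    and eps: "0 < \<epsilon>"
begin

abbreviation "Q \<equiv> Qa p r"
abbreviation "E \<equiv> Ea p c"
abbreviation "u \<equiv> ucost p c r \<beta> \<epsilon>"

definition "QL = r Low * p Low"
definition "QH = r High * p High"
definition "QB = 1 - (1 - QL) * (1 - QH)"
definition "EL = p Low * c Low"
definition "EH = p High * c High"

lemma Q_O: "Q {} = 0" unfolding Qa_def by simp
lemma Q_L: "Q {Low} = QL" unfolding Qa_def QL_def by simp
lemma Q_H: "Q {High} = QH" unfolding Qa_def QH_def by simp
lemma Q_B: "Q {Low, High} = QB" unfolding Qa_def QB_def QL_def QH_def by simp
lemma E_O: "E {} = 0" unfolding Ea_def by simp
lemma E_L: "E {Low} = EL" unfolding Ea_def EL_def by simp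
lemma E_H: "E {High} = EH" unfolding Ea_def EH_def by simp
lemma E_B: "E {Low, High} = EL + EH" unfolding Ea_def EL_def EH_def by simp

lemmas QE_simps = Q_O Q_L Q_H Q_B E_O E_L E_H E_B

lemma QL_pos: "0 < QL" and QL_lt1: "QL < 1"
proof -
  have h1: "r Low < 1" using rLH r[of High] by linarith
  have h2: "r Low * p Low \<le> r Low" using p[of Low] r[of Low] by (simp add: mult_left_le)
  show "QL < 1" unfolding QL_def using h1 h2 by linarith
  show "0 < QL" unfolding QL_def using p[of Low] r[of Low] by simp
qed

lemma QH_pos: "0 < QH" and QH_le1: "QH \<le> 1"
  unfolding QH_def using p[of High] r[of High] by (auto simp: mult_le_one)

lemma EL_pos: "0 < EL" unfolding EL_def using p c by simp
lemma EH_pos: "0 < EH" unfolding EH_def using p c by simp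

lemma QB_alt: "QB = QL + QH * (1 - QL)" unfolding QB_def by algebra
lemma QB_alt2: "QB = QH + QL * (1 - QH)" unfolding QB_def by algebra

lemma QB_gt_QL: "QL < QB" using QB_alt QH_pos QL_lt1 by simp
lemma QB_ge_QH: "QH \<le> QB" using QB_alt2 QL_pos QH_le1 by simp
lemma QB_le1: "QB \<le> 1" unfolding QB_def using QL_pos QL_lt1 QH_pos QH_le1 by simp
lemma QB_pos: "0 < QB" using QB_gt_QL QL_pos by simp
lemma QB_eq1: "QH = 1 \<Longrightarrow> QB = 1" unfolding QB_def by simp
lemma QB_lt1: "QH < 1 \<Longrightarrow> QB < 1" unfolding QB_def using QL_lt1 by (simp add: mult_pos_pos)
lemma QB_gt_QH: "QH < 1 \<Longrightarrow> QH < QB" using QB_alt2 QL_pos by (simp add: mult_pos_pos)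

lemma Q_bounds: "0 \<le> Q a \<and> Q a \<le> 1"
  using act_cases[of a] QL_pos QL_lt1 QH_pos QH_le1 QB_pos QB_le1
  by (auto simp: QE_simps)

lemma Q_le_QB: "Q a \<le> QB"
  using act_cases[of a] QB_gt_QL QB_ge_QH QB_pos by (auto simp: QE_simps)

lemma E_nonneg: "0 \<le> E a"
  using act_cases[of a] EL_pos EH_pos by (auto simp: QE_simps)

lemma E_le_EB: "E a \<le> EL + EH"
  using act_cases[of a] EL_pos EH_pos by (auto simp: QE_simps)

lemma u_formula: "u s a = (1 - \<beta>) * E a + \<beta> * \<epsilon> * (Q a + (1 - Q a) * (real s + 1)^2)"
  unfolding ucost_def by (simp add: algebra_simps power2_eq_square)

lemma u_nonneg: "0 \<le> u s a"
  using Q_bounds[of a] E_nonneg[of a] beta eps unfolding u_formula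
  by (intro add_nonneg_nonneg mult_nonneg_nonneg) auto

lemma u_mono: "s \<le> s' \<Longrightarrow> u s a \<le> u s' a"
  unfolding u_formula using Q_bounds[of a] beta eps
  by (intro add_left_mono mult_left_mono power_mono) auto

definition "Ts = (if QH = 1 then {High} else {Low, High})"
lemma Q_Ts: "Q Ts = QB" unfolding Ts_def using QB_eq1 by (auto simp: QE_simps)

definition "qq = 1 - QB"
definition "cA = \<beta> * \<epsilon> * qq / QB"
definition "cB = 2 * cA * qq / QB"
definition "cC = ((1 - \<beta>) * E Ts + \<beta> * \<epsilon> * QB + qq * (cA + cB)) / QB"
definition "F s = cA * (real s + 1)^2 + cB * (real s + 1) + cC"

lemma qq_nonneg: "0 \<le> qq" unfolding qq_def using QB_le1 by simp
lemma cA_nonneg: "0 \<le> cA" unfolding cA_def using qq_nonneg QB_pos beta eps by simp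
lemma cB_nonneg: "0 \<le> cB" unfolding cB_def using qq_nonneg QB_pos cA_nonneg by simp
lemma cC_nonneg: "0 \<le> cC" unfolding cC_def using qq_nonneg QB_pos cA_nonneg cB_nonneg E_nonneg beta eps
  by (intro divide_nonneg_pos add_nonneg_nonneg mult_nonneg_nonneg) auto

lemma F_rec: "F s = u s Ts + qq * F (s+1)"
proof -
  have Q: "QB \<noteq> 0" using QB_pos by simp
  have "QB * F s = QB * (u s Ts + qq * F (s+1))"
    unfolding F_def u_formula Q_Ts cC_def cB_def cA_def qq_def
    using Q by (simp add: field_simps power2_eq_square)
  then show ?thesis using mult_left_cancel[OF Q] by blast
qed

lemma F_nonneg: "0 \<le> F s"
  unfolding F_def using cA_nonneg cB_nonneg cC_nonneg by simp

lemma F_mono: "s \<le> s' \<Longrightarrow> F s \<le> F s'"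
  unfolding F_def using cA_nonneg cB_nonneg
  by (intro add_mono mult_left_mono power_mono) auto

definition "KF = 2 * (cA + cB + cC)"
lemma F_bound: "F s \<le> KF * (real s ^ 2 + 1)"
proof -
  have x1: "1 \<le> real s + 1" by simp
  have a: "real s + 1 \<le> (real s + 1)^2" using x1 by (simp add: power2_eq_square)
  have b: "(real s + 1)^2 \<le> 2 * (real s ^ 2 + 1)"
  proof -
    have "0 \<le> (real s - 1)^2" by simp
    then show ?thesis by (simp add: power2_eq_square algebra_simps)
  qed
  have x2: "1 \<le> (real s + 1)^2" using x1 a by linarith
  have "cB * (real s + 1) \<le> cB * (real s + 1)^2" by (rule mult_left_mono[OF a cB_nonneg])
  moreover have "cC * 1 \<le> cC * (real s + 1)^2" by (rule mult_left_mono[OF x2 cC_nonneg])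
  ultimately have "F s \<le> cA * (real s + 1)^2 + cB * (real s + 1)^2 + cC * (real s + 1)^2"
    unfolding F_def by linarith
  also have "\<dots> = (cA + cB + cC) * (real s + 1)^2" by algebra
  also have "\<dots> \<le> (cA + cB + cC) * (2 * (real s ^ 2 + 1))"
    using b cA_nonneg cB_nonneg cC_nonneg by (intro mult_left_mono) auto
  finally have "F s \<le> (cA + cB + cC) * (2 * (real s ^ 2 + 1))" .
  moreover have "(cA + cB + cC) * (2 * (real s ^ 2 + 1)) = KF * (real s ^ 2 + 1)"
    unfolding KF_def by algebra
  ultimately show ?thesis by linarith
qed

definition "Vt g s = F s - g / QB"

lemma Vt_rec: "Vt g s = u s Ts - g + (1 - Q Ts) * Vt g (s+1)"
proof -
  have e: "g / QB = g + (1 - QB) * (g / QB)" using QB_pos by (simp add: field_simps)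
  have "(1 - QB) * Vt g (s+1) = (1 - QB) * F (s+1) - (1 - QB) * (g / QB)"
    unfolding Vt_def by (simp add: right_diff_distrib)
  then show ?thesis unfolding Q_Ts using F_rec[of s] e unfolding qq_def Vt_def by linarith
qed

fun Vk :: "real \<Rightarrow> nat \<Rightarrow> nat \<Rightarrow> real" where
  "Vk g 0 s = Vt g s"
| "Vk g (Suc k) s = min4 (\<lambda>a. u s a - g + (1 - Q a) * Vk g k (s+1))"

definition "G = QB * F 1"
definition "dQ = (if QH = 1 then 1 - QL else min (QH * (1 - QL)) (QL * (1 - QH)))"
definition "M0 = G / QB + (1 - \<beta>) * (EL + EH) / dQ"
definition "N = nat \<lceil>M0 / (\<beta> * \<epsilon>)\<rceil> + 1"

lemma G_nonneg: "0 \<le> G" unfolding G_def using QB_pos F_nonneg by simp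

lemma dQ_pos: "0 < dQ"
  unfolding dQ_def using QL_pos QL_lt1 QH_pos QH_le1 by (auto simp: mult_pos_pos)

lemma dQ_le: "Q a < QB \<Longrightarrow> dQ \<le> QB - Q a"
proof -
  assume h: "Q a < QB"
  show ?thesis
  proof (cases "QH = 1")
    case True
    then show ?thesis using h act_cases[of a] QB_eq1[OF True] QL_pos
      unfolding dQ_def by (auto simp: QE_simps)
  next
    case False
    then have "QH < 1" using QH_le1 by simp
    then show ?thesis using h act_cases[of a] False QB_alt QB_alt2 QL_pos QL_lt1 QH_pos
      unfolding dQ_def by (auto simp: QE_simps mult_pos_pos)
  qed
qed

lemma M0_nonneg: "0 \<le> M0"
  unfolding M0_def using G_nonneg QB_pos dQ_pos beta EL_pos EH_pos by simp

lemma N_pos: "1 \<le> N" unfolding N_def by simp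

lemma N_big: "N \<le> s \<Longrightarrow> M0 \<le> \<beta> * \<epsilon> * ((real s + 1)^2 - 1)"
proof -
  assume h: "N \<le> s"
  have be: "0 < \<beta> * \<epsilon>" using beta eps by simp
  have A: "M0 / (\<beta> * \<epsilon>) \<le> real (nat \<lceil>M0 / (\<beta> * \<epsilon>)\<rceil>)" by linarith
  have B: "nat \<lceil>M0 / (\<beta> * \<epsilon>)\<rceil> \<le> s" using h unfolding N_def by linarith
  have C: "real (nat \<lceil>M0 / (\<beta> * \<epsilon>)\<rceil>) \<le> real s" using B by (simp only: of_nat_le_iff)
  have "M0 / (\<beta> * \<epsilon>) \<le> real s" using A C by linarith
  then have "M0 \<le> \<beta> * \<epsilon> * real s" using be by (simp add: field_simps)
  also have "\<dots> \<le> \<beta> * \<epsilon> * ((real s + 1)^2 - 1)"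
    using be by (intro mult_left_mono) (auto simp: power2_eq_square algebra_simps)
  finally show ?thesis .
qed

end

context mdl begin

lemma u_diff: "u s a + (1 - Q a) * Y - (u s b + (1 - Q b) * Y)
   = (1 - \<beta>) * (E a - E b) + (Q b - Q a) * (\<beta> * \<epsilon> * ((real s + 1)^2 - 1) + Y)"
  unfolding u_formula by (simp add: algebra_simps)

lemma E_Ts_le: "Q a = QB \<Longrightarrow> E Ts \<le> E a"
proof -
  assume h: "Q a = QB"
  consider "a = {}" | "a = {Low}" | "a = {High}" | "a = {Low, High}" using act_cases by blast
  then show ?thesis
  proof cases
    case 1 then show ?thesis using h QB_pos by (simp add: QE_simps)
  next
    case 2 then show ?thesis using h QB_gt_QL by (simp add: QE_simps)
  next
    case 3
    then have "QH = QB" using h by (simp add: QE_simps)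
    then have "QH = 1" using QB_gt_QH QH_le1 by force
    then show ?thesis using 3 unfolding Ts_def by simp
  next
    case 4 then show ?thesis unfolding Ts_def using EL_pos by (simp add: QE_simps)
  qed
qed

lemma E_Ts_bounds: "0 \<le> E Ts" "E Ts \<le> EL + EH"
  using E_nonneg E_le_EB by auto

lemma dom:
  assumes g: "0 \<le> g" "g \<le> G" and s: "N \<le> s"
  shows "Vt g s \<le> u s a - g + (1 - Q a) * Vt g (s+1)"
proof -
  define Y where "Y = Vt g (s+1)"
  have gq: "g / QB \<le> G / QB" using g QB_pos by (simp add: divide_right_mono)
  have Y: "- (G / QB) \<le> Y" unfolding Y_def Vt_def using F_nonneg[of "s+1"] gq by linarith
  have key: "0 \<le> (1 - \<beta>) * (E a - E Ts) + (QB - Q a) * (\<beta> * \<epsilon> * ((real s + 1)^2 - 1) + Y)"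
  proof (cases "Q a = QB")
    case True
    then show ?thesis using E_Ts_le[OF True] beta by simp
  next
    case False
    then have lt: "Q a < QB" using Q_le_QB[of a] by simp
    define R where "R = (1 - \<beta>) * (EL + EH) / dQ"
    have R0: "0 \<le> R" unfolding R_def using beta EL_pos EH_pos dQ_pos by simp
    have "M0 - G / QB = R" unfolding M0_def R_def by simp
    then have h1: "R \<le> \<beta> * \<epsilon> * ((real s + 1)^2 - 1) + Y" using N_big[OF s] Y by linarith
    have h2: "dQ \<le> QB - Q a" using dQ_le[OF lt] .
    have "dQ * R \<le> (QB - Q a) * (\<beta> * \<epsilon> * ((real s + 1)^2 - 1) + Y)"
      using h1 h2 R0 dQ_pos by (intro mult_mono) auto
    moreover have "dQ * R = (1 - \<beta>) * (EL + EH)" unfolding R_def using dQ_pos by simp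
    moreover have "(1 - \<beta>) * (E Ts - E a) \<le> (1 - \<beta>) * (EL + EH)"
      using E_Ts_bounds E_nonneg[of a] beta by (intro mult_left_mono) auto
    ultimately show ?thesis by (simp add: algebra_simps)
  qed
  have "u s Ts + (1 - Q Ts) * Y \<le> u s a + (1 - Q a) * Y"
    using u_diff[of s a Y Ts] key unfolding Q_Ts by linarith
  then show ?thesis using Vt_rec[of g s] unfolding Y_def by linarith
qed

definition "V g s = Vk g (N - s) s"

lemma V_tail: "N \<le> s \<Longrightarrow> V g s = Vt g s"
  unfolding V_def by simp

lemma V_rec: "s < N \<Longrightarrow> V g s = min4 (\<lambda>a. u s a - g + (1 - Q a) * V g (s+1))"
proof -
  assume "s < N"
  then have "N - s = Suc (N - (s+1))" by simp
  then show ?thesis unfolding V_def by simp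
qed

lemma V_le:
  assumes "0 \<le> g" "g \<le> G"
  shows "V g s \<le> u s a - g + (1 - Q a) * V g (s+1)"
proof (cases "s < N")
  case True
  have "V g s = min4 (\<lambda>a. u s a - g + (1 - Q a) * V g (s+1))" by (rule V_rec[OF True])
  also have "\<dots> \<le> u s a - g + (1 - Q a) * V g (s+1)" by (rule min4_le)
  finally show ?thesis .
next
  case False
  then show ?thesis using V_tail[of s g] V_tail[of "s+1" g] dom[OF assms, of s a] by simp
qed

lemma V_attain: "\<exists>a. V g s = u s a - g + (1 - Q a) * V g (s+1)"
proof (cases "s < N")
  case True
  define f where "f = (\<lambda>a. u s a - g + (1 - Q a) * V g (s+1))"
  obtain a where a: "min4 f = f a" using min4_attain by blast
  have "V g s = f a" using V_rec[OF True] a unfolding f_def by simp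
  then show ?thesis unfolding f_def by blast
next
  case False
  then have e1: "V g s = Vt g s" and e2: "V g (s+1) = Vt g (s+1)" using V_tail by auto
  show ?thesis apply (rule exI[of _ Ts]) unfolding e1 e2 by (rule Vt_rec)
qed

lemma V_mono1:
  assumes g: "0 \<le> g" "g \<le> G"
  shows "V g s \<le> V g (s+1)"
proof (induction "N - s" arbitrary: s)
  case 0
  then have "N \<le> s" by simp
  then show ?case using V_tail[of s g] V_tail[of "s+1" g] F_mono[of s "s+1"] unfolding Vt_def by simp
next
  case (Suc k)
  then have "k = N - (s+1)" by simp
  then have IH: "V g (s+1) \<le> V g (s+1+1)" using Suc.hyps(1) by blast
  obtain a where a: "V g (s+1) = u (s+1) a - g + (1 - Q a) * V g (s+1+1)" using V_attain by blast
  have "V g s \<le> u s a - g + (1 - Q a) * V g (s+1)" using V_le[OF g] .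
  also have "\<dots> \<le> u (s+1) a - g + (1 - Q a) * V g (s+1+1)"
    using u_mono[of s "s+1" a] IH Q_bounds[of a]
    by (intro add_mono diff_right_mono mult_left_mono) auto
  finally show ?case using a by simp
qed

lemma V_mono:
  assumes g: "0 \<le> g" "g \<le> G" and "s \<le> s'"
  shows "V g s \<le> V g s'"
  using lift_Suc_mono_le[of "V g", OF _ assms(3)] V_mono1[OF g] by simp

lemma V_upper: "V g s \<le> Vt g s"
proof (induction "N - s" arbitrary: s)
  case 0
  then show ?case using V_tail[of s g] by simp
next
  case (Suc k)
  then have lt: "s < N" and "k = N - (s+1)" by simp_all
  then have IH: "V g (s+1) \<le> Vt g (s+1)" using Suc.hyps(1) by blast
  have "V g s \<le> u s Ts - g + (1 - Q Ts) * V g (s+1)"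
    unfolding V_rec[OF lt] by (rule min4_le)
  also have "\<dots> \<le> u s Ts - g + (1 - Q Ts) * Vt g (s+1)"
    using IH Q_bounds[of Ts] by (intro add_left_mono mult_left_mono) auto
  also have "\<dots> = Vt g s" by (rule Vt_rec[symmetric])
  finally show ?case .
qed

lemma Vk_cont: "isCont (\<lambda>g. Vk g k s) g0"
proof (induction k arbitrary: s)
  case 0
  then show ?case unfolding Vk.simps Vt_def using QB_pos by (auto intro!: continuous_intros)
next
  case (Suc k)
  then show ?case unfolding Vk.simps min4_def by (intro continuous_intros Suc)
qed

lemma Vk_zero_nonneg: "0 \<le> Vk 0 k s"
proof (induction k arbitrary: s)
  case 0
  then show ?case by (simp add: Vt_def F_nonneg)
next
  case (Suc k)
  show ?case unfolding Vk.simps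
    using u_nonneg Q_bounds Suc.IH by (intro min4_ge) (simp add: add_nonneg_nonneg mult_nonneg_nonneg)
qed

lemma exists_g: "\<exists>g. 0 \<le> g \<and> g \<le> G \<and> V g 1 = 0"
proof -
  have a: "V G 1 \<le> 0" using V_upper[of G 1] QB_pos unfolding Vt_def G_def by simp
  have b: "0 \<le> V 0 1" unfolding V_def by (rule Vk_zero_nonneg)
  have c: "\<forall>x. 0 \<le> x \<and> x \<le> G \<longrightarrow> isCont (\<lambda>g. Vk g (N - 1) 1) x" using Vk_cont by blast
  have a': "Vk G (N - 1) 1 \<le> 0" using a unfolding V_def .
  have b': "0 \<le> Vk 0 (N - 1) 1" by (rule Vk_zero_nonneg)
  have "\<exists>x. 0 \<le> x \<and> x \<le> G \<and> Vk x (N - 1) 1 = 0"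
    using IVT2[of "\<lambda>g. Vk g (N - 1) 1" G 0 0, OF a' b' G_nonneg c] by simp
  then show ?thesis unfolding V_def by auto
qed

end

definition pick4 :: "action \<Rightarrow> action \<Rightarrow> action \<Rightarrow> action \<Rightarrow> (action \<Rightarrow> real) \<Rightarrow> action" where
  "pick4 a1 a2 a3 a4 f = (if f a1 \<le> f a2 \<and> f a1 \<le> f a3 \<and> f a1 \<le> f a4 then a1
     else if f a2 \<le> f a3 \<and> f a2 \<le> f a4 then a2 else if f a3 \<le> f a4 then a3 else a4)"

lemma pick4_min: "f (pick4 a1 a2 a3 a4 f) \<le> f a1 \<and> f (pick4 a1 a2 a3 a4 f) \<le> f a2 \<and>
   f (pick4 a1 a2 a3 a4 f) \<le> f a3 \<and> f (pick4 a1 a2 a3 a4 f) \<le> f a4"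
  unfolding pick4_def by auto

lemma pick4_in: "pick4 a1 a2 a3 a4 f = a1 \<or> pick4 a1 a2 a3 a4 f = a2 \<or>
   pick4 a1 a2 a3 a4 f = a3 \<or> pick4 a1 a2 a3 a4 f = a4"
  unfolding pick4_def by simp

lemma pick4_last: "pick4 a1 a2 a3 a4 f = a4 \<Longrightarrow> a4 \<noteq> a1 \<Longrightarrow> a4 \<noteq> a2 \<Longrightarrow> a4 \<noteq> a3 \<Longrightarrow>
   f a4 < f a1 \<and> f a4 < f a2 \<and> f a4 < f a3"
  unfolding pick4_def by (auto split: if_splits)

lemma comb_contra:
  fixes x y A B C :: real
  assumes "0 < x" "0 \<le> y" "x * A + y * B \<le> (x + y) * C" "C < A" "C < B"
  shows False
proof -
  have "x * C < x * A" using assms by simp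
  moreover have "y * C \<le> y * B" using assms by (simp add: mult_left_mono)
  ultimately have "(x + y) * C < x * A + y * B" by (simp add: algebra_simps)
  then show False using assms(3) by simp
qed

lemma qmono:
  fixes e1 e2 q1 q2 w1 w2 :: real
  assumes "e1 - q1 * w1 \<le> e2 - q2 * w1" "e2 - q2 * w2 \<le> e1 - q1 * w2" "w1 < w2"
  shows "q1 \<le> q2"
proof (rule ccontr)
  assume "\<not> q1 \<le> q2"
  then have "0 < (q1 - q2) * (w2 - w1)" using assms(3) by simp
  moreover have "(q1 - q2) * (w2 - w1) = q1 * w2 - q1 * w1 - q2 * w2 + q2 * w1" by algebra
  ultimately show False using assms(1,2) by linarith
qed

lemma doubleton_ne: "{Low, High} \<noteq> {}" "{Low, High} \<noteq> {Low}" "{Low, High} \<noteq> {High}"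
  "{Low} \<noteq> {High}" "{High} \<noteq> {Low}" "{Low} \<noteq> {Low, High}" "{High} \<noteq> {Low, High}"
  by (auto simp: set_eq_iff)

locale mdl2 = mdl +
  fixes g :: real
  assumes g0: "0 \<le> g" and gG: "g \<le> G" and gV: "V g 1 = 0"
begin

abbreviation "h \<equiv> V g"

definition "W s = \<beta> * \<epsilon> * ((real s + 1)^2 - 1) + h (s+1)"
definition "fw w a = (1 - \<beta>) * E a - Q a * w"
definition "rho = (EL / QL) / (EH / QH)"
definition "ratio = (1 - QH) / (1 - QL)"
definition "sel w = (if 1 \<le> rho then pick4 {} {High} {Low, High} {Low} (fw w)
                     else pick4 {} {Low} {Low, High} {High} (fw w))"
definition "d s = (if s < N then sel (W s) else Ts)"
definition "d' s = (if \<exists>s'. 1 \<le> s' \<and> s' < s \<and> Q (d s') = 1 then {Low, High} else d s)"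

lemma fw_sel_min: "fw w (sel w) \<le> fw w a"
  using act_cases[of a] pick4_min unfolding sel_def by (auto split: if_splits)

lemma sel_in: "sel w = {} \<or> sel w = {Low} \<or> sel w = {High} \<or> sel w = {Low, High}"
proof (cases "1 \<le> rho")
  case True
  then have e: "sel w = pick4 {} {High} {Low, High} {Low} (fw w)" unfolding sel_def by simp
  from pick4_in[of "{}" "{High}" "{Low, High}" "{Low}" "fw w"] show ?thesis
    unfolding e[symmetric] by (elim disjE) simp_all
next
  case False
  then have e: "sel w = pick4 {} {Low} {Low, High} {High} (fw w)" unfolding sel_def by simp
  from pick4_in[of "{}" "{Low}" "{Low, High}" "{High}" "fw w"] show ?thesis
    unfolding e[symmetric] by (elim disjE) simp_all
qed

lemma step_id: "u s a - g + (1 - Q a) * h (s+1) = (\<beta> * \<epsilon> * (real s + 1)^2 - g + h (s+1)) + fw (W s) a"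
  unfolding u_formula fw_def W_def by (simp add: algebra_simps)

lemma d_opt: "h s = u s (d s) - g + (1 - Q (d s)) * h (s+1)"
proof (cases "s < N")
  case True
  define f where "f = (\<lambda>a. u s a - g + (1 - Q a) * h (s+1))"
  have le: "f (sel (W s)) \<le> f a" for a unfolding f_def step_id using fw_sel_min by simp
  have "h s = min4 f" unfolding f_def by (rule V_rec[OF True])
  also have "\<dots> = f (sel (W s))"
    using min4_le[of f "sel (W s)"] min4_ge[of "f (sel (W s))" f] le by (simp add: antisym)
  finally show ?thesis using True unfolding f_def d_def by simp
next
  case False
  then have e1: "h s = Vt g s" and e2: "h (s+1) = Vt g (s+1)" using V_tail by auto
  have e3: "d s = Ts" using False unfolding d_def by simp
  show ?thesis unfolding e1 e2 e3 by (rule Vt_rec)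
qed

lemma acoe_le: "h s \<le> u s a - g + (1 - Q a) * h (s+1)"
  by (rule V_le[OF g0 gG])

lemma W_mono: "s \<le> s' \<Longrightarrow> W s \<le> W s'"
  unfolding W_def using V_mono[OF g0 gG, of "s+1" "s'+1"] beta eps
  by (intro add_mono mult_left_mono diff_right_mono power_mono) auto

lemma sel_Q_mono: "w1 \<le> w2 \<Longrightarrow> Q (sel w1) \<le> Q (sel w2)"
proof (cases "w1 = w2")
  case False
  assume "w1 \<le> w2"
  then have lt: "w1 < w2" using False by simp
  show ?thesis
    using fw_sel_min[of w1 "sel w2"] fw_sel_min[of w2 "sel w1"] unfolding fw_def
    by (rule qmono[OF _ _ lt])
qed simp

lemma d_Q_mono: "s1 \<le> s2 \<Longrightarrow> Q (d s1) \<le> Q (d s2)"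
proof (cases "s2 < N")
  case True
  assume "s1 \<le> s2"
  then show ?thesis using True W_mono sel_Q_mono unfolding d_def by simp
next
  case False
  then show ?thesis using Q_le_QB unfolding d_def by (simp add: Q_Ts)
qed

lemma d_tail: "N \<le> s \<Longrightarrow> d s = Ts" unfolding d_def by simp

lemma d_in: "d s = {} \<or> d s = {Low} \<or> d s = {High} \<or> d s = {Low, High}"
proof (cases "s < N")
  case True
  then have e: "d s = sel (W s)" unfolding d_def by simp
  show ?thesis unfolding e by (rule sel_in)
next
  case False
  then show ?thesis unfolding d_def Ts_def by simp
qed

lemma d_notB: "QH = 1 \<Longrightarrow> d s \<noteq> {Low, High}"
proof -
  assume h1: "QH = 1"
  have lt: "fw w {High} < fw w {Low, High}" for w
    unfolding fw_def using h1 QB_eq1[OF h1] beta EL_pos by (simp add: QE_simps)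
  have "sel w \<noteq> {Low, High}" for w
  proof
    assume "sel w = {Low, High}"
    then have "fw w {Low, High} \<le> fw w {High}" using fw_sel_min[of w "{High}"] by simp
    then show False using lt[of w] by simp
  qed
  then show ?thesis unfolding d_def Ts_def using h1 doubleton_ne by simp
qed

lemma QL_EH_pos: "0 < QL * EH" using QL_pos EH_pos by simp

lemma rho_eq: "rho * (QL * EH) = EL * QH"
  unfolding rho_def using QL_pos EH_pos QH_pos by (simp add: field_simps)

lemma ratio_eq: "ratio * (1 - QL) = 1 - QH"
  unfolding ratio_def using QL_lt1 by (simp add: field_simps)

lemma notL_cond:
  assumes "1 \<le> rho" "ratio \<le> rho"
  shows "\<not> (fw w {Low} < fw w {} \<and> fw w {Low} < fw w {High} \<and> fw w {Low} < fw w {Low, High})"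
proof
  assume H: "fw w {Low} < fw w {} \<and> fw w {Low} < fw w {High} \<and> fw w {Low} < fw w {Low, High}"
  have c1: "QL * EH \<le> EL * QH"
    using mult_right_mono[OF assms(1) less_imp_le[OF QL_EH_pos]] rho_eq by simp
  have "ratio * (QL * EH) \<le> EL * QH"
    using mult_right_mono[OF assms(2) less_imp_le[OF QL_EH_pos]] rho_eq by simp
  then have "ratio * (QL * EH) * (1 - QL) \<le> EL * QH * (1 - QL)"
    using QL_lt1 by (intro mult_right_mono) auto
  moreover have "ratio * (QL * EH) * (1 - QL) = (1 - QH) * QL * EH"
    using ratio_eq by (metis mult.commute mult.left_commute)
  ultimately have c2: "(1 - QH) * QL * EH \<le> EL * QH * (1 - QL)" by simp
  show False
  proof (cases "QL \<le> QH")
    case True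
    have "QH * fw w {Low} - (QL * fw w {High} + (QH - QL) * fw w {}) = (1 - \<beta>) * (QH * EL - QL * EH)"
      unfolding fw_def by (simp add: QE_simps algebra_simps)
    moreover have "0 \<le> (1 - \<beta>) * (QH * EL - QL * EH)" using beta c1 by (intro mult_nonneg_nonneg) (simp_all add: mult.commute)
    ultimately have "QL * fw w {High} + (QH - QL) * fw w {} \<le> (QL + (QH - QL)) * fw w {Low}" by simp
    then show False using comb_contra[of QL "QH - QL"] QL_pos True H by auto
  next
    case False
    have "(QB - QH) * fw w {Low} - ((QB - QL) * fw w {High} + (QL - QH) * fw w {Low, High})
       = (1 - \<beta>) * (QH * (1 - QL) * EL - QL * (1 - QH) * EH)"
      unfolding fw_def QB_def by (simp add: QE_simps QB_def algebra_simps)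
    moreover have "QL * (1 - QH) * EH \<le> QH * (1 - QL) * EL" using c2 by (simp add: mult_ac)
    then have "0 \<le> (1 - \<beta>) * (QH * (1 - QL) * EL - QL * (1 - QH) * EH)"
      using beta by (intro mult_nonneg_nonneg) simp_all
    ultimately have "(QB - QL) * fw w {High} + (QL - QH) * fw w {Low, High} \<le> ((QB - QL) + (QL - QH)) * fw w {Low}"
      by simp
    then show False using comb_contra[of "QB - QL" "QL - QH"] QB_gt_QL False H by auto
  qed
qed

lemma notH_cond:
  assumes "rho < 1" "rho < ratio"
  shows "\<not> (fw w {High} < fw w {} \<and> fw w {High} < fw w {Low} \<and> fw w {High} < fw w {Low, High})"
proof
  assume H: "fw w {High} < fw w {} \<and> fw w {High} < fw w {Low} \<and> fw w {High} < fw w {Low, High}"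
  have c1: "EL * QH \<le> QL * EH"
    using mult_right_mono[OF less_imp_le[OF assms(1)] less_imp_le[OF QL_EH_pos]] rho_eq by simp
  have "EL * QH \<le> ratio * (QL * EH)"
    using mult_right_mono[OF less_imp_le[OF assms(2)] less_imp_le[OF QL_EH_pos]] rho_eq by simp
  then have "EL * QH * (1 - QL) \<le> ratio * (QL * EH) * (1 - QL)"
    using QL_lt1 by (intro mult_right_mono) auto
  moreover have "ratio * (QL * EH) * (1 - QL) = (1 - QH) * QL * EH"
    using ratio_eq by (metis mult.commute mult.left_commute)
  ultimately have c2: "EL * QH * (1 - QL) \<le> (1 - QH) * QL * EH" by simp
  have rpos: "0 < rho" unfolding rho_def using EL_pos EH_pos QL_pos QH_pos by simp
  have QH1: "QH < 1"
  proof (rule ccontr)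
    assume "\<not> QH < 1" then have "QH = 1" using QH_le1 by simp
    then have "ratio = 0" unfolding ratio_def by simp
    then show False using assms rpos by simp
  qed
  show False
  proof (cases "QH \<le> QL")
    case True
    have "QL * fw w {High} - (QH * fw w {Low} + (QL - QH) * fw w {}) = (1 - \<beta>) * (QL * EH - QH * EL)"
      unfolding fw_def by (simp add: QE_simps algebra_simps)
    moreover have "0 \<le> (1 - \<beta>) * (QL * EH - QH * EL)" using beta c1 by (intro mult_nonneg_nonneg) (simp_all add: mult.commute)
    ultimately have "QH * fw w {Low} + (QL - QH) * fw w {} \<le> (QH + (QL - QH)) * fw w {High}" by simp
    then show False using comb_contra[of QH "QL - QH"] QH_pos True H by auto
  next
    case False
    have "(QB - QL) * fw w {High} - ((QB - QH) * fw w {Low} + (QH - QL) * fw w {Low, High})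
       = (1 - \<beta>) * (QL * (1 - QH) * EH - QH * (1 - QL) * EL)"
      unfolding fw_def QB_def by (simp add: QE_simps QB_def algebra_simps)
    moreover have "QH * (1 - QL) * EL \<le> QL * (1 - QH) * EH" using c2 by (simp add: mult_ac)
    then have "0 \<le> (1 - \<beta>) * (QL * (1 - QH) * EH - QH * (1 - QL) * EL)"
      using beta by (intro mult_nonneg_nonneg) simp_all
    ultimately have "(QB - QH) * fw w {Low} + (QH - QL) * fw w {Low, High} \<le> ((QB - QH) + (QH - QL)) * fw w {High}"
      by simp
    then show False using comb_contra[of "QB - QH" "QH - QL"] QB_gt_QH[OF QH1] False H by auto
  qed
qed

lemma d_notL: "max 1 ratio \<le> rho \<Longrightarrow> d s \<noteq> {Low}"
proof -
  assume a: "max 1 ratio \<le> rho"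
  have "sel w \<noteq> {Low}" for w
  proof
    assume "sel w = {Low}"
    then have "pick4 {} {High} {Low, High} {Low} (fw w) = {Low}" using a unfolding sel_def by simp
    from pick4_last[OF this] doubleton_ne have "fw w {Low} < fw w {} \<and> fw w {Low} < fw w {High} \<and> fw w {Low} < fw w {Low, High}"
      by auto
    then show False using notL_cond[of w] a by simp
  qed
  then show ?thesis unfolding d_def Ts_def using doubleton_ne by simp
qed

lemma d_notH: "rho < min 1 ratio \<Longrightarrow> d s \<noteq> {High}"
proof -
  assume a: "rho < min 1 ratio"
  have QH1: "QH < 1"
  proof (rule ccontr)
    assume "\<not> QH < 1" then have "QH = 1" using QH_le1 by simp
    then have "ratio = 0" unfolding ratio_def by simp
    moreover have "0 < rho" unfolding rho_def using EL_pos EH_pos QL_pos QH_pos by simp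
    ultimately show False using a by simp
  qed
  have "sel w \<noteq> {High}" for w
  proof
    assume "sel w = {High}"
    then have "pick4 {} {Low} {Low, High} {High} (fw w) = {High}" using a unfolding sel_def by simp
    from pick4_last[OF this] doubleton_ne have "fw w {High} < fw w {} \<and> fw w {High} < fw w {Low} \<and> fw w {High} < fw w {Low, High}"
      by auto
    then show False using notH_cond[of w] a by simp
  qed
  then show ?thesis unfolding d_def Ts_def using doubleton_ne QH1 by simp
qed

end

lemma struct3_intro:
  fixes rk :: "action \<Rightarrow> nat" and d :: "nat \<Rightarrow> action"
  assumes r0: "rk {} = 0" and r1: "rk x = 1" and r2: "rk y = 2" and r3: "rk {Low, High} = 3"
    and rng: "\<And>s. 1 \<le> s \<Longrightarrow> d s = {} \<or> d s = x \<or> d s = y \<or> d s = {Low, High}"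
    and mono: "\<And>s1 s2. 1 \<le> s1 \<Longrightarrow> s1 \<le> s2 \<Longrightarrow> rk (d s1) \<le> rk (d s2)"
    and ev: "\<And>s. M \<le> s \<Longrightarrow> d s = {Low, High}"
  shows "struct3 x y d"
proof -
  define th where "th i = (LEAST s. 1 \<le> s \<and> i \<le> rk (d s))" for i
  have ex: "1 \<le> max M 1 \<and> i \<le> rk (d (max M 1))" if "i \<le> 3" for i
    using ev[of "max M 1"] r3 that by simp
  have thP: "1 \<le> th i \<and> i \<le> rk (d (th i))" if "i \<le> 3" for i
    unfolding th_def by (rule LeastI[where P="\<lambda>s. 1 \<le> s \<and> i \<le> rk (d s)", OF ex[OF that]])
  have thL: "th i \<le> s" if "1 \<le> s" "i \<le> rk (d s)" for i s
    unfolding th_def by (rule Least_le) (use that in simp)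
  have key: "(s < th i) = (rk (d s) < i)" if "i \<le> 3" "1 \<le> s" for i s
  proof
    assume "s < th i"
    then show "rk (d s) < i" using thL[OF that(2)] by (meson not_le)
  next
    assume a: "rk (d s) < i"
    show "s < th i"
    proof (rule ccontr)
      assume "\<not> s < th i"
      then have "th i \<le> s" by simp
      then have "rk (d (th i)) \<le> rk (d s)" using mono thP[OF that(1)] by blast
      then show False using thP[OF that(1)] a by simp
    qed
  qed
  show ?thesis unfolding struct3_def
  proof (intro exI conjI allI impI)
    show "1 \<le> th 1" using thP[of 1] by simp
    show "th 1 \<le> th 2" using thP[of 2] thL[of "th 2" 1] by simp
    show "th 2 \<le> th 3" using thP[of 3] thL[of "th 3" 2] by simp
    fix s :: nat assume s: "1 \<le> s"
    have k1: "(s < th 1) = (rk (d s) < 1)" using key[OF _ s, of 1] by simp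
    have k2: "(s < th 2) = (rk (d s) < 2)" using key[OF _ s, of 2] by simp
    have k3: "(s < th 3) = (rk (d s) < 3)" using key[OF _ s, of 3] by simp
    show "d s = (if s < th 1 then {} else if s < th 2 then x else if s < th 3 then y else {Low, High})"
      unfolding k1 k2 k3 using rng[OF s] r0 r1 r2 r3 by (elim disjE) simp_all
  qed
qed

lemma struct2_intro:
  fixes rk :: "action \<Rightarrow> nat" and d :: "nat \<Rightarrow> action"
  assumes r0: "rk {} = 0" and r1: "rk x = 1" and r3: "rk {Low, High} = 2"
    and rng: "\<And>s. 1 \<le> s \<Longrightarrow> d s = {} \<or> d s = x \<or> d s = {Low, High}"
    and mono: "\<And>s1 s2. 1 \<le> s1 \<Longrightarrow> s1 \<le> s2 \<Longrightarrow> rk (d s1) \<le> rk (d s2)"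
    and ev: "\<And>s. M \<le> s \<Longrightarrow> d s = {Low, High}"
  shows "struct2 x d"
proof -
  define th where "th i = (LEAST s. 1 \<le> s \<and> i \<le> rk (d s))" for i
  have ex: "1 \<le> max M 1 \<and> i \<le> rk (d (max M 1))" if "i \<le> 2" for i
    using ev[of "max M 1"] r3 that by simp
  have thP: "1 \<le> th i \<and> i \<le> rk (d (th i))" if "i \<le> 2" for i
    unfolding th_def by (rule LeastI[where P="\<lambda>s. 1 \<le> s \<and> i \<le> rk (d s)", OF ex[OF that]])
  have thL: "th i \<le> s" if "1 \<le> s" "i \<le> rk (d s)" for i s
    unfolding th_def by (rule Least_le) (use that in simp)
  have key: "(s < th i) = (rk (d s) < i)" if "i \<le> 2" "1 \<le> s" for i s
  proof
    assume "s < th i"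
    then show "rk (d s) < i" using thL[OF that(2)] by (meson not_le)
  next
    assume a: "rk (d s) < i"
    show "s < th i"
    proof (rule ccontr)
      assume "\<not> s < th i"
      then have "th i \<le> s" by simp
      then have "rk (d (th i)) \<le> rk (d s)" using mono thP[OF that(1)] by blast
      then show False using thP[OF that(1)] a by simp
    qed
  qed
  show ?thesis unfolding struct2_def
  proof (intro exI conjI allI impI)
    show "1 \<le> th 1" using thP[of 1] by simp
    show "th 1 \<le> th 2" using thP[of 2] thL[of "th 2" 1] by simp
    fix s :: nat assume s: "1 \<le> s"
    have k1: "(s < th 1) = (rk (d s) < 1)" using key[OF _ s, of 1] by simp
    have k2: "(s < th 2) = (rk (d s) < 2)" using key[OF _ s, of 2] by simp
    show "d s = (if s < th 1 then {} else if s < th 2 then x else {Low, High})"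
      unfolding k1 k2 using rng[OF s] r0 r1 r3 by (elim disjE) simp_all
  qed
qed

lemma threshold_intro:
  assumes ev: "\<And>s. M \<le> s \<Longrightarrow> d s = e"
  shows "threshold_type d"
  unfolding threshold_type_def
proof (intro exI[of _ M] exI[of _ "\<lambda>k. d (k + 1)"] exI[of _ "\<lambda>k. k + 1"] conjI allI impI)
  fix k s assume "k < M" "k + 1 \<le> s \<and> s < Suc k + 1"
  then have "s = k + 1" by linarith
  then show "d s = d (k + 1)" by simp
next
  fix s assume "M + 1 \<le> s"
  then show "d s = d (M + 1)" using ev[of s] ev[of "M+1"] by simp
qed simp_all

context mdl2 begin

definition "Zs = {s. 1 \<le> s \<and> (\<forall>s'. 1 \<le> s' \<and> s' < s \<longrightarrow> Q (d s') < 1)}"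

lemma d'_Z: "s \<in> Zs \<Longrightarrow> d' s = d s"
  unfolding Zs_def d'_def by force

lemma Z1: "1 \<in> Zs" unfolding Zs_def by simp

lemma Zc: "s \<in> Zs \<Longrightarrow> Q (d' s) < 1 \<Longrightarrow> s + 1 \<in> Zs"
proof -
  assume a: "s \<in> Zs" "Q (d' s) < 1"
  then have q: "Q (d s) < 1" using d'_Z by simp
  show ?thesis unfolding Zs_def
  proof (intro CollectI conjI allI impI)
    show "1 \<le> s + 1" by simp
    fix s' assume h: "1 \<le> s' \<and> s' < s + 1"
    show "Q (d s') < 1"
    proof (cases "s' < s")
      case True
      then show ?thesis using a(1) h unfolding Zs_def by blast
    next
      case False
      then have "s' = s" using h by simp
      then show ?thesis using q by simp
    qed
  qed
qed

lemma d'_ev: "N + 1 \<le> s \<Longrightarrow> d' s = {Low, High}"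
proof (cases "QH = 1")
  case True
  assume s: "N + 1 \<le> s"
  have "Q (d N) = 1" using d_tail[of N] Q_Ts QB_eq1[OF True] by simp
  then have "\<exists>s'. 1 \<le> s' \<and> s' < s \<and> Q (d s') = 1" using N_pos s by (intro exI[of _ N]) simp
  then show ?thesis unfolding d'_def by simp
next
  case False
  assume s: "N + 1 \<le> s"
  then have "d s = {Low, High}" using d_tail[of s] False unfolding Ts_def by simp
  then show ?thesis unfolding d'_def by simp
qed

lemma d'_cases: "d' s = {Low, High} \<or> d' s = d s"
  unfolding d'_def by simp

lemma d'_rank_mono:
  fixes rk :: "action \<Rightarrow> nat"
  assumes compat: "\<And>s1 s2. s1 \<le> s2 \<Longrightarrow> Q (d s1) \<le> Q (d s2) \<Longrightarrow> rk (d s1) \<le> rk (d s2)"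
    and top: "\<And>a. rk a \<le> rk {Low, High}"
    and s: "1 \<le> s1" "s1 \<le> s2"
  shows "rk (d' s1) \<le> rk (d' s2)"
proof (cases "\<exists>s'. 1 \<le> s' \<and> s' < s2 \<and> Q (d s') = 1")
  case True
  then have "d' s2 = {Low, High}" unfolding d'_def by (simp only: if_True)
  then show ?thesis using top by simp
next
  case False
  then have e2: "d' s2 = d s2" unfolding d'_def by (simp only: if_False)
  have "\<not> (\<exists>s'. 1 \<le> s' \<and> s' < s1 \<and> Q (d s') = 1)" using False s by auto
  then have e1: "d' s1 = d s1" unfolding d'_def by (simp only: if_False)
  show ?thesis unfolding e1 e2 using compat[OF s(2) d_Q_mono[OF s(2)]] .
qed

lemma QH1_of_ratio: "rho < ratio \<Longrightarrow> QH < 1"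
proof (rule ccontr)
  assume a: "rho < ratio" "\<not> QH < 1"
  then have "QH = 1" using QH_le1 by simp
  then have "ratio = 0" unfolding ratio_def by simp
  moreover have "0 < rho" unfolding rho_def using EL_pos EH_pos QL_pos QH_pos by simp
  ultimately show False using a by simp
qed

lemma ratio_lt1: "ratio < 1 \<Longrightarrow> QL < QH"
  unfolding ratio_def using QL_lt1 by (simp add: divide_less_eq)

lemma ratio_gt1: "1 < ratio \<Longrightarrow> QH < QL"
  unfolding ratio_def using QL_lt1 by (simp add: less_divide_eq)

definition "rkA a = (if a = {} then 0 else if a = {Low} then 1 else if a = {High} then 2 else (3::nat))"
definition "rkB a = (if a = {} then 0 else if a = {High} then 1 else if a = {Low} then 2 else (3::nat))"
definition "rkC a = (if a = {} then 0 else if a = {High} then 1 else (2::nat))"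
definition "rkD a = (if a = {} then 0 else if a = {Low} then 1 else (2::nat))"

lemma rkA_top: "rkA a \<le> rkA {Low, High}" unfolding rkA_def using doubleton_ne by (auto split: if_splits)
lemma rkB_top: "rkB a \<le> rkB {Low, High}" unfolding rkB_def using doubleton_ne by (auto split: if_splits)
lemma rkC_top: "rkC a \<le> rkC {Low, High}" unfolding rkC_def using doubleton_ne by (auto split: if_splits)
lemma rkD_top: "rkD a \<le> rkD {Low, High}" unfolding rkD_def using doubleton_ne by (auto split: if_splits)

lemma case1:
  assumes "ratio < rho" "rho < 1"
  shows "struct3 {Low} {High} d'"
proof -
  have lt: "QL < QH" using assms ratio_lt1 by simp
  have compat: "rkA (d s1) \<le> rkA (d s2)" if "s1 \<le> s2" "Q (d s1) \<le> Q (d s2)" for s1 s2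
  proof (cases "QH = 1")
    case True
    then have "d s1 \<noteq> {Low, High}" "d s2 \<noteq> {Low, High}" using d_notB by auto
    then show ?thesis using d_in[of s1] d_in[of s2] that(2) lt QL_pos doubleton_ne
      by (elim disjE) (simp_all add: rkA_def QE_simps)
  next
    case False
    then have "QH < QB" using QB_gt_QH QH_le1 by simp
    then show ?thesis using d_in[of s1] d_in[of s2] that(2) lt QL_pos doubleton_ne
      by (elim disjE) (simp_all add: rkA_def QE_simps)
  qed
  show ?thesis
  proof (rule struct3_intro[where rk = rkA and M = "N+1"])
    show "rkA {} = 0" "rkA {Low} = 1" "rkA {High} = 2" "rkA {Low, High} = 3"
      using doubleton_ne by (simp_all add: rkA_def)
    show "d' s = {} \<or> d' s = {Low} \<or> d' s = {High} \<or> d' s = {Low, High}" for s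
      using d'_cases[of s] d_in[of s] by auto
    show "rkA (d' s1) \<le> rkA (d' s2)" if "1 \<le> s1" "s1 \<le> s2" for s1 s2
      by (rule d'_rank_mono[where rk=rkA, OF compat rkA_top that(1) that(2)])
    show "d' s = {Low, High}" if "N + 1 \<le> s" for s using d'_ev that by simp
  qed
qed

lemma case2:
  assumes "1 < rho" "rho < ratio"
  shows "struct3 {High} {Low} d'"
proof -
  have lt: "QH < QL" using assms ratio_gt1 by simp
  have QH1: "QH < 1" using QH1_of_ratio assms by simp
  have compat: "rkB (d s1) \<le> rkB (d s2)" if "s1 \<le> s2" "Q (d s1) \<le> Q (d s2)" for s1 s2
    using d_in[of s1] d_in[of s2] that(2) lt QH_pos QB_gt_QL doubleton_ne
    by (elim disjE) (simp_all add: rkB_def QE_simps)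
  show ?thesis
  proof (rule struct3_intro[where rk = rkB and M = "N+1"])
    show "rkB {} = 0" "rkB {High} = 1" "rkB {Low} = 2" "rkB {Low, High} = 3"
      using doubleton_ne by (simp_all add: rkB_def)
    show "d' s = {} \<or> d' s = {High} \<or> d' s = {Low} \<or> d' s = {Low, High}" for s
      using d'_cases[of s] d_in[of s] by auto
    show "rkB (d' s1) \<le> rkB (d' s2)" if "1 \<le> s1" "s1 \<le> s2" for s1 s2
      by (rule d'_rank_mono[where rk=rkB, OF compat rkB_top that(1) that(2)])
    show "d' s = {Low, High}" if "N + 1 \<le> s" for s using d'_ev that by simp
  qed
qed

lemma case3:
  assumes "max 1 ratio \<le> rho"
  shows "struct2 {High} d'"
proof -
  have nL: "d s \<noteq> {Low}" for s using d_notL assms by simp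
  have compat: "rkC (d s1) \<le> rkC (d s2)" if "s1 \<le> s2" "Q (d s1) \<le> Q (d s2)" for s1 s2
  proof (cases "QH = 1")
    case True
    then have "d s1 \<noteq> {Low, High}" "d s2 \<noteq> {Low, High}" using d_notB by auto
    then show ?thesis using d_in[of s1] d_in[of s2] nL[of s1] nL[of s2] that(2) QH_pos doubleton_ne
      by (elim disjE) (simp_all add: rkC_def QE_simps)
  next
    case False
    then have "QH < QB" using QB_gt_QH QH_le1 by simp
    then show ?thesis using d_in[of s1] d_in[of s2] nL[of s1] nL[of s2] that(2) QH_pos doubleton_ne
      by (elim disjE) (simp_all add: rkC_def QE_simps)
  qed
  show ?thesis
  proof (rule struct2_intro[where rk = rkC and M = "N+1"])
    show "rkC {} = 0" "rkC {High} = 1" "rkC {Low, High} = 2"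
      using doubleton_ne by (simp_all add: rkC_def)
    show "d' s = {} \<or> d' s = {High} \<or> d' s = {Low, High}" for s
      using d'_cases[of s] d_in[of s] nL[of s] by auto
    show "rkC (d' s1) \<le> rkC (d' s2)" if "1 \<le> s1" "s1 \<le> s2" for s1 s2
      by (rule d'_rank_mono[where rk=rkC, OF compat rkC_top that(1) that(2)])
    show "d' s = {Low, High}" if "N + 1 \<le> s" for s using d'_ev that by simp
  qed
qed

lemma case4:
  assumes "rho < min 1 ratio"
  shows "struct2 {Low} d'"
proof -
  have nH: "d s \<noteq> {High}" for s using d_notH assms by simp
  have QH1: "QH < 1" using QH1_of_ratio assms by simp
  have compat: "rkD (d s1) \<le> rkD (d s2)" if "s1 \<le> s2" "Q (d s1) \<le> Q (d s2)" for s1 s2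
    using d_in[of s1] d_in[of s2] nH[of s1] nH[of s2] that(2) QL_pos QB_gt_QL doubleton_ne
    by (elim disjE) (simp_all add: rkD_def QE_simps)
  show ?thesis
  proof (rule struct2_intro[where rk = rkD and M = "N+1"])
    show "rkD {} = 0" "rkD {Low} = 1" "rkD {Low, High} = 2"
      using doubleton_ne by (simp_all add: rkD_def)
    show "d' s = {} \<or> d' s = {Low} \<or> d' s = {Low, High}" for s
      using d'_cases[of s] d_in[of s] nH[of s] by auto
    show "rkD (d' s1) \<le> rkD (d' s2)" if "1 \<le> s1" "s1 \<le> s2" for s1 s2
      by (rule d'_rank_mono[where rk=rkD, OF compat rkD_top that(1) that(2)])
    show "d' s = {Low, High}" if "N + 1 \<le> s" for s using d'_ev that by simp
  qed
qed

lemma d'_threshold: "threshold_type d'"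
  by (rule threshold_intro[OF d'_ev])

end

lemma exp_lin:
  assumes "finite (set_pmf M)"
  shows "measure_pmf.expectation M (\<lambda>x. k + f x - (g x :: real)) =
         k + measure_pmf.expectation M f - measure_pmf.expectation M g"
proof -
  have i: "integrable M f" "integrable M g" "integrable M (\<lambda>x. k)" "integrable M (\<lambda>x. k + f x)"
    using assms by (simp_all add: integrable_measure_pmf_finite)
  have "measure_pmf.expectation M (\<lambda>x. k + f x - g x) =
     measure_pmf.expectation M (\<lambda>x. k + f x) - measure_pmf.expectation M g"
    by (rule Bochner_Integration.integral_diff[OF i(4) i(2)])
  also have "measure_pmf.expectation M (\<lambda>x. k + f x) = measure_pmf.expectation M (\<lambda>x. k) + measure_pmf.expectation M f"
    by (rule Bochner_Integration.integral_add[OF i(3) i(1)])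
  finally show ?thesis by simp
qed

lemma Ef_lin: "Ef p r \<psi> t (\<lambda>s. k + f1 s - f2 s) = k + Ef p r \<psi> t f1 - Ef p r \<psi> t f2"
  unfolding Ef_def by (rule exp_lin[OF fin_hist])

lemma J_lin: "Jx p r \<psi> t (\<lambda>s a. k + f1 s - \<phi> s a) = k + Ef p r \<psi> t f1 - Jx p r \<psi> t \<phi>"
proof -
  have "\<And>x. measure_pmf.expectation (\<psi> (fst x) (snd x)) (\<lambda>a. k + f1 (snd x) - \<phi> (snd x) a)
     = k + f1 (snd x) - measure_pmf.expectation (\<psi> (fst x) (snd x)) (\<lambda>a. \<phi> (snd x) a)"
    using exp_lin[OF fin_act, of _ k "\<lambda>a. f1 _" ] by simp
  then show ?thesis unfolding Jx_def Ef_def by (simp add: exp_lin[OF fin_hist])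
qed

lemma J_lin2: "Jx p r \<psi> t (\<lambda>s a. k1 * f1 s + k0) = k1 * Ef p r \<psi> t f1 + k0"
proof -
  have "(\<lambda>s a. k1 * f1 s + k0) = (\<lambda>(s::nat) (a::action). k0 + k1 * f1 s - 0)" by (auto simp: fun_eq_iff)
  then have "Jx p r \<psi> t (\<lambda>s a. k1 * f1 s + k0) = Jx p r \<psi> t (\<lambda>s a. k0 + k1 * f1 s - 0)" by simp
  also have "\<dots> = k0 + Ef p r \<psi> t (\<lambda>s. k1 * f1 s) - Jx p r \<psi> t (\<lambda>s a. 0)" by (rule J_lin)
  also have "Ef p r \<psi> t (\<lambda>s. k1 * f1 s) = k1 * Ef p r \<psi> t f1"
    unfolding J_const[symmetric] by (rule J_cmult)
  finally show ?thesis using J_cst[of p r \<psi> t 0] by simp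
qed

lemma Ef_mono: "(\<And>s. f1 s \<le> f2 s) \<Longrightarrow> Ef p r \<psi> t f1 \<le> Ef p r \<psi> t f2"
  unfolding J_const[symmetric] by (rule J_mono)

lemma cube_step:
  fixes y z :: real
  assumes "0 \<le> y" "0 \<le> z" "z \<le> y + 2"
  shows "z^3 / 6 \<le> y^3 / 6 + z^2"
proof (cases "z \<le> 6")
  case True
  have "z^3 = z * z^2" by (simp add: power3_eq_cube power2_eq_square)
  also have "\<dots> \<le> 6 * z^2" using True by (intro mult_right_mono) auto
  finally have "z^3 / 6 \<le> z^2" by simp
  moreover have "0 \<le> y^3 / 6" using assms by simp
  ultimately show ?thesis by linarith
next
  case False
  then have "0 \<le> z - 2" "z - 2 \<le> y" using assms by auto
  then have "(z - 2)^3 \<le> y^3" by (intro power_mono) auto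
  moreover have "(z - 2)^3 = z^3 - 6 * z^2 + 12 * z - 8"
    by (simp add: power3_eq_cube power2_eq_square algebra_simps)
  ultimately show ?thesis using False by linarith
qed

lemma ereal_shift: "ereal (x - e) \<le> L \<Longrightarrow> ereal x \<le> L + ereal e"
  by (cases L) auto

context mdl2 begin

abbreviation "stg \<psi> t \<equiv> stage_cost p c r \<beta> \<epsilon> \<psi> t"
definition "sq s = (real s)^2"

lemma h1: "h 1 = 0" by (rule gV)

lemma stage_ge: "g + Ef p r \<psi> t h - Ef p r \<psi> (Suc t) h \<le> stg \<psi> t"
proof -
  have e1: "Ef p r \<psi> (Suc t) h = Jx p r \<psi> t (\<lambda>s a. Q a * h 1 + (1 - Q a) * h (s+1))"
    by (rule Ef_Suc[OF Q_bounds])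
  have e2: "Jx p r \<psi> t (\<lambda>s a. g + h s - (Q a * h 1 + (1 - Q a) * h (s+1)))
     = g + Ef p r \<psi> t h - Jx p r \<psi> t (\<lambda>s a. Q a * h 1 + (1 - Q a) * h (s+1))"
    by (rule J_lin)
  have "Jx p r \<psi> t (\<lambda>s a. g + h s - (Q a * h 1 + (1 - Q a) * h (s+1))) \<le> Jx p r \<psi> t u"
    using acoe_le h1 by (intro J_mono) (simp add: algebra_simps)
  then show ?thesis unfolding stage_J e1 e2[symmetric] .
qed

lemma sum_ge: "real T * g - Ef p r \<psi> T h \<le> (\<Sum>t<T. stg \<psi> t)"
proof (induction T)
  case 0
  then show ?case using h1 by (simp add: Ef_0)
next
  case (Suc T)
  then show ?case using stage_ge[of \<psi> T] by (simp add: algebra_simps)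
qed

lemma stage_ge_sq: "\<beta> * \<epsilon> * Ef p r \<psi> (Suc t) sq \<le> stg \<psi> t"
proof -
  have "\<beta> * \<epsilon> * Ef p r \<psi> (Suc t) sq = Jx p r \<psi> t (\<lambda>s a. \<beta> * \<epsilon> * (Q a * sq 1 + (1 - Q a) * sq (s+1)))"
    unfolding Ef_Suc[OF Q_bounds] by (rule J_cmult[symmetric])
  also have "\<dots> \<le> Jx p r \<psi> t u"
  proof (rule J_mono)
    fix s a
    have "0 \<le> (1 - \<beta>) * E a" using beta E_nonneg by simp
    then show "\<beta> * \<epsilon> * (Q a * sq 1 + (1 - Q a) * sq (s+1)) \<le> u s a"
      unfolding u_formula sq_def of_nat_Suc by (simp add: add.commute)
  qed
  finally show ?thesis unfolding stage_J .
qed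

lemma X_nonneg: "0 \<le> Ef p r \<psi> t sq"
  using Ef_mono[of "\<lambda>s. 0" sq p r \<psi> t] J_cst[of p r \<psi> t 0] J_const[of p r \<psi> t "\<lambda>s. 0"]
  unfolding sq_def by simp

lemma X_step: "sqrt (Ef p r \<psi> (Suc t) sq) \<le> sqrt (Ef p r \<psi> t sq) + 2"
proof -
  define X where "X = Ef p r \<psi> t sq"
  define Y where "Y = sqrt X"
  define b where "b = Y + 1"
  have X0: "0 \<le> X" unfolding X_def by (rule X_nonneg)
  have Y0: "0 \<le> Y" unfolding Y_def using X0 by simp
  have b0: "0 < b" unfolding b_def using Y0 by simp
  have XY: "X = Y^2" unfolding Y_def using X0 by simp
  have pw: "Q a * sq 1 + (1 - Q a) * sq (s+1) \<le> (1 + 1/b) * sq s + (1 + b)" for s a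
  proof -
    have q: "0 \<le> Q a" "Q a \<le> 1" using Q_bounds by auto
    have one: "1 \<le> (real s + 1)^2" by (rule one_le_power) simp
    have "Q a * sq 1 + (1 - Q a) * sq (s+1) \<le> Q a * (real s + 1)^2 + (1 - Q a) * (real s + 1)^2"
      unfolding sq_def using q one by (intro add_mono mult_left_mono) auto
    also have "\<dots> = (real s)^2 + 2 * real s + 1" by (simp add: algebra_simps power2_eq_square)
    also have "2 * real s \<le> (real s)^2 / b + b"
    proof -
      have "0 \<le> (real s - b)^2 / b" using b0 by simp
      moreover have "(real s - b)^2 / b = (real s)^2 / b + b - 2 * real s"
        using b0 by (simp add: field_simps power2_eq_square)
      ultimately show ?thesis by linarith
    qed
    then have "(real s)^2 + 2 * real s + 1 \<le> (1 + 1/b) * sq s + (1 + b)"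
      unfolding sq_def by (simp add: algebra_simps)
    finally show ?thesis by simp
  qed
  have "Ef p r \<psi> (Suc t) sq \<le> Jx p r \<psi> t (\<lambda>s a. (1 + 1/b) * sq s + (1 + b))"
    unfolding Ef_Suc[OF Q_bounds] using pw by (intro J_mono)
  also have "\<dots> = (1 + 1/b) * X + (1 + b)" unfolding X_def by (rule J_lin2)
  also have "\<dots> \<le> (Y + 2)^2"
  proof -
    have a1: "Y^2 / b \<le> Y" unfolding b_def using Y0 by (simp add: field_simps power2_eq_square)
    have a2: "(1 + 1/b) * X = X + X / b" by (simp add: distrib_right)
    have a3: "(Y + 2)^2 = Y^2 + 4 * Y + 4" by (simp add: power2_eq_square algebra_simps)
    show ?thesis using a1 a2 a3 Y0 unfolding XY b_def by linarith
  qed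
  finally have "sqrt (Ef p r \<psi> (Suc t) sq) \<le> sqrt ((Y + 2)^2)" by (rule real_sqrt_le_mono)
  then show ?thesis using Y0 unfolding Y_def X_def by simp
qed

lemma cube: "(sqrt (Ef p r \<psi> T sq))^3 / 6 - 1 \<le> (\<Sum>t<T. Ef p r \<psi> (Suc t) sq)"
proof (induction T)
  case 0
  then show ?case by (simp add: Ef_0 sq_def)
next
  case (Suc T)
  define y where "y = sqrt (Ef p r \<psi> T sq)"
  define z where "z = sqrt (Ef p r \<psi> (Suc T) sq)"
  have y0: "0 \<le> y" unfolding y_def using X_nonneg by simp
  have z0: "0 \<le> z" unfolding z_def using X_nonneg by simp
  have zy: "z \<le> y + 2" unfolding z_def y_def by (rule X_step)
  have z2: "z^2 = Ef p r \<psi> (Suc T) sq" unfolding z_def by (rule real_sqrt_pow2[OF X_nonneg])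
  have cs: "z^3 / 6 \<le> y^3 / 6 + z^2" by (rule cube_step[OF y0 z0 zy])
  have IH: "y^3 / 6 - 1 \<le> (\<Sum>t<T. Ef p r \<psi> (Suc t) sq)" using Suc.IH unfolding y_def .
  have "(\<Sum>t<Suc T. Ef p r \<psi> (Suc t) sq) = (\<Sum>t<T. Ef p r \<psi> (Suc t) sq) + Ef p r \<psi> (Suc T) sq"
    by simp
  then show ?case unfolding z_def[symmetric] using cs IH z2 by linarith
qed

lemma lower2: "\<beta> * \<epsilon> * ((sqrt (Ef p r \<psi> T sq))^3 / 6 - 1) \<le> (\<Sum>t<T. stg \<psi> t)"
proof -
  have "\<beta> * \<epsilon> * ((sqrt (Ef p r \<psi> T sq))^3 / 6 - 1) \<le> \<beta> * \<epsilon> * (\<Sum>t<T. Ef p r \<psi> (Suc t) sq)"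
    using cube beta eps by (intro mult_left_mono) auto
  also have "\<dots> = (\<Sum>t<T. \<beta> * \<epsilon> * Ef p r \<psi> (Suc t) sq)" by (simp add: sum_distrib_left)
  also have "\<dots> \<le> (\<Sum>t<T. stg \<psi> t)" by (intro sum_mono stage_ge_sq)
  finally show ?thesis .
qed

lemma KF_nonneg: "0 \<le> KF" unfolding KF_def using cA_nonneg cB_nonneg cC_nonneg by simp

lemma h_upper: "h s \<le> KF * sq s + KF"
proof -
  have "h s \<le> Vt g s" by (rule V_upper)
  also have "\<dots> \<le> F s" unfolding Vt_def using g0 QB_pos by simp
  also have "\<dots> \<le> KF * (real s ^ 2 + 1)" by (rule F_bound)
  finally show ?thesis unfolding sq_def by (simp add: algebra_simps)
qed

lemma lower1: "real T * g - KF * (Ef p r \<psi> T sq + 1) \<le> (\<Sum>t<T. stg \<psi> t)"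
proof -
  have "Ef p r \<psi> T h \<le> Ef p r \<psi> T (\<lambda>s. KF * sq s + KF)" by (rule Ef_mono[OF h_upper])
  also have "\<dots> = Jx p r \<psi> T (\<lambda>s a. KF * sq s + KF)" by (rule J_const[symmetric])
  also have "\<dots> = KF * Ef p r \<psi> T sq + KF" by (rule J_lin2)
  finally show ?thesis using sum_ge[of T \<psi>] by (simp add: algebra_simps)
qed

end

context mdl2 begin

lemma nat_ceil_le: "x \<le> real (nat \<lceil>x\<rceil>)" by linarith

lemma lower_avg: "ereal g \<le> avg_cost p c r \<beta> \<epsilon> \<psi>"
proof -
  define A where "A T = (\<Sum>t<T. stg \<psi> t)" for T
  have be: "0 < \<beta> * \<epsilon>" using beta eps by simp
  have ev: "eventually (\<lambda>T. g - e \<le> A T / real T) sequentially" if e: "0 < e" for e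
  proof -
    define \<eta> where "\<eta> = e / 2"
    define m where "m = \<eta> / (KF + 1)"
    define S0 where "S0 = 6 * (g + \<beta> * \<epsilon>) / (\<beta> * \<epsilon> * m)"
    define T0 where "T0 = max 1 (max (nat \<lceil>KF / \<eta>\<rceil>) (nat \<lceil>S0^2 / m\<rceil>))"
    have \<eta>0: "0 < \<eta>" unfolding \<eta>_def using e by simp
    have m0: "0 < m" unfolding m_def using \<eta>0 KF_nonneg by simp
    have S00: "0 \<le> S0" unfolding S0_def using g0 be m0 by simp
    show ?thesis unfolding eventually_sequentially
    proof (intro exI[of _ T0] allI impI)
      fix T assume T: "T0 \<le> T"
      have T1: "1 \<le> real T" using T unfolding T0_def by simp
      have "nat \<lceil>KF / \<eta>\<rceil> \<le> T" using T unfolding T0_def by simp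
      then have TK: "KF / \<eta> \<le> real T" using nat_ceil_le[of "KF / \<eta>"] by linarith
      have "nat \<lceil>S0^2 / m\<rceil> \<le> T" using T unfolding T0_def by simp
      then have TS: "S0^2 / m \<le> real T" using nat_ceil_le[of "S0^2 / m"] by linarith
      define X where "X = Ef p r \<psi> T sq"
      define Y where "Y = sqrt X"
      have X0: "0 \<le> X" unfolding X_def by (rule X_nonneg)
      have Y0: "0 \<le> Y" unfolding Y_def using X0 by simp
      have L1: "real T * g - KF * (X + 1) \<le> A T" unfolding X_def A_def by (rule lower1)
      have L2: "\<beta> * \<epsilon> * (Y^3 / 6 - 1) \<le> A T" unfolding Y_def X_def A_def by (rule lower2)
      have goal: "(g - e) * real T \<le> A T"
      proof (cases "X \<le> m * real T")
        case True
        have Km: "KF * m \<le> \<eta>" unfolding m_def using \<eta>0 KF_nonneg by (simp add: field_simps)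
        have "KF * X \<le> KF * (m * real T)" by (rule mult_left_mono[OF True KF_nonneg])
        also have "\<dots> = (KF * m) * real T" by simp
        also have "\<dots> \<le> \<eta> * real T" using Km T1 by (intro mult_right_mono) auto
        finally have a1: "KF * X \<le> \<eta> * real T" .
        have a2: "KF \<le> \<eta> * real T" using TK \<eta>0 by (simp add: field_simps)
        have a3: "(g - e) * real T = real T * g - \<eta> * real T - \<eta> * real T" unfolding \<eta>_def by (simp add: algebra_simps)
        have a4: "KF * (X + 1) = KF * X + KF" by (simp add: algebra_simps)
        show ?thesis using L1 a1 a2 a3 a4 by linarith
      next
        case False
        then have Xm: "m * real T < X" by simp
        have "S0^2 \<le> m * real T" using TS m0 by (simp add: field_simps)
        then have "sqrt (S0^2) \<le> sqrt X" using Xm by (intro real_sqrt_le_mono) linarith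
        then have SY: "S0 \<le> Y" unfolding Y_def using S00 by simp
        have Y3: "Y^3 = Y * X" unfolding Y_def using X0 by (simp add: power3_eq_cube real_sqrt_mult_self)
        have "S0 * (m * real T) \<le> Y * X" using SY Xm S00 Y0 m0 T1 by (intro mult_mono) auto
        then have "\<beta> * \<epsilon> * (S0 * (m * real T) / 6 - 1) \<le> \<beta> * \<epsilon> * (Y^3 / 6 - 1)"
          unfolding Y3 using be by (intro mult_left_mono) auto
        moreover have "\<beta> * \<epsilon> * (S0 * (m * real T) / 6 - 1) = g * real T + \<beta> * \<epsilon> * (real T - 1)"
          unfolding S0_def using beta eps m0 by (simp add: field_simps)
        moreover have "0 \<le> \<beta> * \<epsilon> * (real T - 1)" using be T1 by simp
        moreover have "0 \<le> e * real T" using e by simp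
        moreover have "(g - e) * real T = g * real T - e * real T" by (simp add: algebra_simps)
        ultimately show ?thesis using L2 by linarith
      qed
      show "g - e \<le> A T / real T" using goal T1 by (simp add: pos_le_divide_eq)
    qed
  qed
  show ?thesis unfolding avg_cost_def A_def[symmetric]
  proof (rule ereal_le_epsilon2)
    fix e :: real assume e: "0 < e"
    have "ereal (g - e) \<le> limsup (\<lambda>T. ereal (A T / real T))"
      apply (rule le_Limsup[OF trivial_limit_sequentially])
      by (rule eventually_mono[OF ev[OF e]]) simp
    then show "ereal g \<le> limsup (\<lambda>T. ereal (A T / real T)) + ereal e" by (rule ereal_shift)
  qed
qed

lemma stage_eq: "stg (stationary d') t = g + Ef p r (stationary d') t h - Ef p r (stationary d') (Suc t) h"
proof -
  have "stg (stationary d') t = Ef p r (stationary d') t (\<lambda>s. u s (d' s))"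
    unfolding stage_J J_stat ..
  also have "\<dots> = Ef p r (stationary d') t (\<lambda>s. g + h s - (Q (d' s) * h 1 + (1 - Q (d' s)) * h (s+1)))"
  proof (rule Ef_cong_Z[OF Q_bounds Z1 Zc])
    fix s assume "s \<in> Zs"
    then have "d' s = d s" by (rule d'_Z)
    then show "u s (d' s) = g + h s - (Q (d' s) * h 1 + (1 - Q (d' s)) * h (s+1))"
      using d_opt[of s] h1 by simp
  qed
  also have "\<dots> = g + Ef p r (stationary d') t h - Ef p r (stationary d') t (\<lambda>s. Q (d' s) * h 1 + (1 - Q (d' s)) * h (s+1))"
    by (rule Ef_lin)
  also have "Ef p r (stationary d') t (\<lambda>s. Q (d' s) * h 1 + (1 - Q (d' s)) * h (s+1)) = Ef p r (stationary d') (Suc t) h"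
    unfolding Ef_Suc[OF Q_bounds] J_stat ..
  finally show ?thesis .
qed

lemma sum_eq: "(\<Sum>t<T. stg (stationary d') t) = real T * g + h 1 - Ef p r (stationary d') T h"
proof (induction T)
  case 0
  then show ?case by (simp add: Ef_0)
next
  case (Suc T)
  then show ?case using stage_eq[of T] by (simp add: algebra_simps)
qed

lemma upper_avg: "avg_cost p c r \<beta> \<epsilon> (stationary d') \<le> ereal g"
proof -
  define A where "A T = (\<Sum>t<T. stg (stationary d') t)" for T
  have Ah: "A T \<le> real T * g - h 0" for T
  proof -
    have "Ef p r (stationary d') T (\<lambda>s. h 0) \<le> Ef p r (stationary d') T h"
      by (rule Ef_mono) (rule V_mono[OF g0 gG], simp)
    moreover have "Ef p r (stationary d') T (\<lambda>s. h 0) = h 0"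
      unfolding J_const[symmetric] by (rule J_cst)
    ultimately show ?thesis unfolding A_def sum_eq h1 by simp
  qed
  show ?thesis unfolding avg_cost_def A_def[symmetric]
  proof (rule ereal_le_epsilon2)
    fix e :: real assume e: "0 < e"
    have "limsup (\<lambda>T. ereal (A T / real T)) \<le> ereal (g + e)"
    proof (rule Limsup_bounded)
      show "\<forall>\<^sub>F T in sequentially. ereal (A T / real T) \<le> ereal (g + e)"
        unfolding eventually_sequentially
      proof (intro exI[of _ "max 1 (nat \<lceil>\<bar>h 0\<bar> / e\<rceil>)"] allI impI)
        fix T assume T: "max 1 (nat \<lceil>\<bar>h 0\<bar> / e\<rceil>) \<le> T"
        have T1: "1 \<le> real T" using T by simp
        have "nat \<lceil>\<bar>h 0\<bar> / e\<rceil> \<le> T" using T by simp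
        then have "\<bar>h 0\<bar> / e \<le> real T" using nat_ceil_le[of "\<bar>h 0\<bar> / e"] by linarith
        then have "\<bar>h 0\<bar> \<le> e * real T" using e by (simp add: field_simps)
        then have "A T \<le> (g + e) * real T" using Ah[of T] by (simp add: algebra_simps)
        then show "ereal (A T / real T) \<le> ereal (g + e)" using T1 by (simp add: pos_divide_le_eq)
      qed
    qed
    then show "limsup (\<lambda>T. ereal (A T / real T)) \<le> ereal g + ereal e" by simp
  qed
qed

lemma optimal: "optimal_ds p c r \<beta> \<epsilon> d'"
  unfolding optimal_ds_def using upper_avg lower_avg order.trans by blast

theorem main2: "\<exists>d. optimal_ds p c r \<beta> \<epsilon> d \<and> threshold_type d \<and>
     (ratio < rho \<and> rho < 1 \<longrightarrow> struct3 {Low} {High} d) \<and>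
     (1 < rho \<and> rho < ratio \<longrightarrow> struct3 {High} {Low} d) \<and>
     (rho \<ge> max 1 ratio \<longrightarrow> struct2 {High} d) \<and>
     (rho < min 1 ratio \<longrightarrow> struct2 {Low} d)"
  using optimal d'_threshold case1 case2 case3 case4 by blast

end

theorem corollary1:
  fixes p c r :: "vtype \<Rightarrow> real" and \<beta> \<epsilon> :: real
  assumes p: "\<And>n. 0 < p n \<and> p n \<le> 1"
    and c: "\<And>n. 0 < c n"
    and r: "\<And>n. 0 < r n \<and> r n \<le> 1"
    and rLH: "r Low < r High"
    and beta: "0 < \<beta>" "\<beta> < 1"
    and eps: "0 < \<epsilon>"
  defines "QL \<equiv> Qa p r actL" and "QH \<equiv> Qa p r actH"
    and "\<rho> \<equiv> gamma p c r actO actL / gamma p c r actO actH"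
  shows "\<exists>d. optimal_ds p c r \<beta> \<epsilon> d \<and> threshold_type d \<and>
     ((1 - QH) / (1 - QL) < \<rho> \<and> \<rho> < 1 \<longrightarrow> struct3 actL actH d) \<and>
     (1 < \<rho> \<and> \<rho> < (1 - QH) / (1 - QL) \<longrightarrow> struct3 actH actL d) \<and>
     (\<rho> \<ge> max 1 ((1 - QH) / (1 - QL)) \<longrightarrow> struct2 actH d) \<and>
     (\<rho> < min 1 ((1 - QH) / (1 - QL)) \<longrightarrow> struct2 actL d)"
proof -
  interpret M: mdl p c r \<beta> \<epsilon>
    by unfold_locales (use p c r rLH beta eps in auto)
  obtain g where g: "0 \<le> g" "g \<le> M.G" "M.V g 1 = 0" using M.exists_g by blast
  interpret M2: mdl2 p c r \<beta> \<epsilon> g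
    by unfold_locales (use g in auto)
  have eQL: "QL = M.QL" unfolding QL_def by (rule M.Q_L)
  have eQH: "QH = M.QH" unfolding QH_def by (rule M.Q_H)
  have erho: "\<rho> = M2.rho" unfolding \<rho>_def M2.rho_def gamma_def by (simp add: M.QE_simps)
  have eratio: "(1 - QH) / (1 - QL) = M2.ratio" unfolding M2.ratio_def eQL eQH ..
  show ?thesis unfolding erho eratio using M2.main2 .
qed

end
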